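(* The set of nilpotent elements of $\mathcal A_V$ is norm dense in $\mathcal A_V$.
   Context: $V$ is the Volterra operator on $L^2[0,1]$, $V\xi(x)=\int_0^x\xi(t)\,dt$, and $\mathcal A_V$ is the operator-norm closure in $\mathcal B(L^2[0,1])$ of the polynomials $p(V)$ with $p(0)=0$. *)

theory Defs
  imports "HOL-Analysis.Analysis" "HOL-Computational_Algebra.Polynomial"
begin

text \<open>L^2[0,1] (complex scalars), represented by square-integrable Borel functions on [0,1];
  elements of L^2 are identified when their difference has L^2-norm zero (a.e. equality).\<close>

definition M01 :: "real measure" where
  "M01 = restrict_space lborel {0..1}"

definition L2 :: "(real \<Rightarrow> complex) set" where
  "L2 = {f. f \<in> borel_measurable M01 \<and> integrable M01 (\<lambda>x. (cmod (f x))\<^sup>2)}"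

definition l2norm :: "(real \<Rightarrow> complex) \<Rightarrow> real" where
  "l2norm f = sqrt (integral\<^sup>L M01 (\<lambda>x. (cmod (f x))\<^sup>2))"

text \<open>Bounded linear operators on L^2[0,1]: maps L^2 into L^2, well defined on a.e.-classes,
  linear modulo null functions, and bounded.\<close>

definition bounded_op :: "((real \<Rightarrow> complex) \<Rightarrow> (real \<Rightarrow> complex)) \<Rightarrow> bool" where
  "bounded_op T \<longleftrightarrow>
     (\<forall>f\<in>L2. T f \<in> L2) \<and>
     (\<forall>f\<in>L2. \<forall>g\<in>L2. l2norm (\<lambda>x. f x - g x) = 0 \<longrightarrow> l2norm (\<lambda>x. T f x - T g x) = 0) \<and>
     (\<forall>f\<in>L2. \<forall>g\<in>L2. \<forall>a b. l2norm (\<lambda>x. T (\<lambda>y. a * f y + b * g y) x - (a * T f x + b * T g x)) = 0) \<and>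
     (\<exists>C. \<forall>f\<in>L2. l2norm (T f) \<le> C * l2norm f)"

definition opnorm :: "((real \<Rightarrow> complex) \<Rightarrow> (real \<Rightarrow> complex)) \<Rightarrow> real" where
  "opnorm T = Sup {l2norm (T f) | f. f \<in> L2 \<and> l2norm f \<le> 1}"

definition volterra :: "(real \<Rightarrow> complex) \<Rightarrow> (real \<Rightarrow> complex)" where
  "volterra f = (\<lambda>x. LINT t:{0..x}|lborel. f t)"

definition polyV :: "complex poly \<Rightarrow> (real \<Rightarrow> complex) \<Rightarrow> (real \<Rightarrow> complex)" where
  "polyV p f = (\<lambda>x. \<Sum>k\<le>degree p. coeff p k * (volterra ^^ k) f x)"

definition in_AV :: "((real \<Rightarrow> complex) \<Rightarrow> (real \<Rightarrow> complex)) \<Rightarrow> bool" where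
  "in_AV T \<longleftrightarrow> bounded_op T \<and>
     (\<forall>e>0. \<exists>p. poly p 0 = 0 \<and> opnorm (\<lambda>f x. T f x - polyV p f x) < e)"

definition nilpotent_op :: "((real \<Rightarrow> complex) \<Rightarrow> (real \<Rightarrow> complex)) \<Rightarrow> bool" where
  "nilpotent_op T \<longleftrightarrow> (\<exists>n. \<forall>f\<in>L2. l2norm ((T ^^ n) f) = 0)"

end

theory Submission
  imports Defs
begin

lemma space_M01[simp]: "space M01 = {0..1}"
  by (simp add: M01_def)

lemma sets_M01_in: "{0..1::real} \<inter> space lborel \<in> sets lborel" by simp

lemma emeasure_M01: "emeasure M01 {0..1} = 1"
  unfolding M01_def by (simp add: emeasure_restrict_space)

interpretation M01: finite_measure M01
  by (rule finite_measureI) (simp add: emeasure_M01)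

lemma L2_meas_lborel:
  assumes "f \<in> L2" shows "(\<lambda>t. indicator {0..1} t *\<^sub>R f t) \<in> borel_measurable lborel"
  using assms unfolding L2_def M01_def
  by (subst (asm) borel_measurable_restrict_space_iff) auto

lemma L2_integrable:
  assumes "f \<in> L2" shows "integrable M01 f"
proof -
  have m: "f \<in> borel_measurable M01" using assms by (simp add: L2_def)
  have "integrable M01 (\<lambda>x. (cmod (f x))\<^sup>2)" using assms by (simp add: L2_def)
  hence "integrable M01 (\<lambda>x. norm ((f x)\<^sup>2))" by (simp add: norm_power)
  hence "integrable M01 (\<lambda>x. (f x)\<^sup>2)" using m by (subst (asm) integrable_norm_iff) auto
  thus ?thesis using M01.square_integrable_imp_integrable m by blast
qed

lemma L2_set_integrable:
  assumes "f \<in> L2" shows "set_integrable lborel {0..1} f"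
  using L2_integrable[OF assms] unfolding M01_def set_integrable_def
  by (subst (asm) integrable_restrict_space) auto

definition good :: "(real \<Rightarrow> complex) \<Rightarrow> bool" where
  "good f \<longleftrightarrow> f \<in> L2 \<and> (\<forall>t. t \<notin> {0..1} \<longrightarrow> f t = 0)"

definition K :: "(real \<Rightarrow> complex) \<Rightarrow> (real \<Rightarrow> complex) \<Rightarrow> real \<Rightarrow> complex" where
  "K h f x = (LINT t:{0..x}|lborel. h (x - t) * f t)"

lemma good_eq: "good f \<Longrightarrow> f = (\<lambda>t. indicator {0..1} t *\<^sub>R f t)"
  by (auto simp: good_def indicator_def fun_eq_iff)

lemma good_meas: "good f \<Longrightarrow> f \<in> borel_measurable lborel"
  using L2_meas_lborel good_eq unfolding good_def by metis

lemma good_meas_borel: "good f \<Longrightarrow> f \<in> borel_measurable borel"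
  using good_meas by (simp add: measurable_lborel1)

lemma good_integrable: "good f \<Longrightarrow> integrable lborel f"
  using L2_set_integrable good_eq unfolding good_def set_integrable_def by metis

lemma cont_meas: "continuous_on UNIV (h::real \<Rightarrow> complex) \<Longrightarrow> h \<in> borel_measurable borel"
  by (simp add: borel_measurable_continuous_onI)

lemma K_prod_meas:
  assumes "good f" "continuous_on UNIV h"
  shows "(\<lambda>(x,t). indicator {0..x} t *\<^sub>R (h (x - t) * f t)) \<in> borel_measurable (lborel \<Otimes>\<^sub>M lborel)"
proof -
  note [measurable] = good_meas_borel[OF assms(1)] cont_meas[OF assms(2)]
  have e: "(\<lambda>(x,t). indicator {0..x} t *\<^sub>R (h (x - t) * f t)) =
     (\<lambda>z. (if 0 \<le> snd z \<and> snd z \<le> fst z then 1 else 0) *\<^sub>R (h (fst z - snd z) * f (snd z)))"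
    by (auto simp: fun_eq_iff indicator_def)
  show ?thesis unfolding e by measurable
qed

lemma K_meas:
  assumes "good f" "continuous_on UNIV h"
  shows "K h f \<in> borel_measurable lborel"
proof -
  have "(\<lambda>x. \<integral>t. indicator {0..x} t *\<^sub>R (h (x - t) * f t) \<partial>lborel) \<in> borel_measurable lborel"
    using K_prod_meas[OF assms] by (intro lborel.borel_measurable_lebesgue_integral) simp
  thus ?thesis unfolding K_def set_lebesgue_integral_def by (simp add: fun_eq_iff)
qed

lemma cont_bound:
  assumes "continuous_on UNIV (h::real \<Rightarrow> complex)"
  obtains B where "B \<ge> 0" "\<And>u. u \<in> {0..1} \<Longrightarrow> norm (h u) \<le> B"
proof -
  have "compact (h ` {0..1})"
    by (rule compact_continuous_image) (auto intro: continuous_on_subset[OF assms])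
  then obtain B where "\<forall>y\<in>h ` {0..1}. norm y \<le> B" using compact_imp_bounded bounded_iff by metis
  hence "\<And>u. u \<in> {0..1} \<Longrightarrow> norm (h u) \<le> B" by auto
  moreover have "B \<ge> 0" using calculation[of 0] by (meson atLeastAtMost_iff norm_ge_zero order_trans zero_le_one order_refl)
  ultimately show ?thesis using that by blast
qed

lemma K_int:
  assumes "good f" "continuous_on UNIV h" "x \<le> 1"
  shows "integrable lborel (\<lambda>t. indicator {0..x} t *\<^sub>R (h (x - t) * f t))"
proof -
  obtain B where B: "B \<ge> 0" "\<And>u. u \<in> {0..1} \<Longrightarrow> norm (h u) \<le> B" using cont_bound[OF assms(2)] by blast
  note [measurable] = good_meas_borel[OF assms(1)] cont_meas[OF assms(2)]
  have i: "integrable lborel (\<lambda>t. B *\<^sub>R f t)" using good_integrable[OF assms(1)] by simp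
  have m: "(\<lambda>t. indicator {0..x} t *\<^sub>R (h (x - t) * f t)) \<in> borel_measurable lborel"
      by measurable
  have a: "AE t in lborel. norm (indicator {0..x} t *\<^sub>R (h (x - t) * f t)) \<le> norm (B *\<^sub>R f t)"
    proof (rule AE_I2)
      fix t show "norm (indicator {0..x} t *\<^sub>R (h (x - t) * f t)) \<le> norm (B *\<^sub>R f t)"
      proof (cases "t \<in> {0..x}")
        case True
        hence "x - t \<in> {0..1}" using assms(3) by auto
        hence "norm (h (x - t)) \<le> B" using B by blast
        thus ?thesis using True B(1) by (simp add: norm_mult mult_right_mono)
      qed simp
    qed
  show ?thesis by (rule Bochner_Integration.integrable_bound[OF i m a])
qed

lemma good_sq_int: "good f \<Longrightarrow> integrable lborel (\<lambda>t. (cmod (f t))\<^sup>2)"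
proof -
  assume g: "good f"
  have "integrable M01 (\<lambda>x. (cmod (f x))\<^sup>2)" using g unfolding good_def L2_def by blast
  moreover have "integrable (restrict_space lborel {0..1}) (\<lambda>x. (cmod (f x))\<^sup>2) \<longleftrightarrow> integrable lborel (\<lambda>x. indicator {0..1} x *\<^sub>R (cmod (f x))\<^sup>2)"
     by (rule integrable_restrict_space[OF sets_M01_in])
  ultimately have "integrable lborel (\<lambda>t. indicator {0..1} t *\<^sub>R (cmod (f t))\<^sup>2)"
    unfolding M01_def by simp
  moreover have "(\<lambda>t. indicator {0..1} t *\<^sub>R (cmod (f t))\<^sup>2) = (\<lambda>t. (cmod (f t))\<^sup>2)"
    using g unfolding good_def by (auto simp: fun_eq_iff indicator_def)
  ultimately show ?thesis by simp
qed

lemma good_l2norm: "good f \<Longrightarrow> l2norm f = sqrt (\<integral>t. (cmod (f t))\<^sup>2 \<partial>lborel)"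
proof -
  assume g: "good f"
  have "integral\<^sup>L M01 (\<lambda>x. (cmod (f x))\<^sup>2) = (\<integral>t. indicator {0..1} t *\<^sub>R (cmod (f t))\<^sup>2 \<partial>lborel)"
    unfolding M01_def by (rule integral_restrict_space[OF sets_M01_in])
  moreover have "(\<lambda>t. indicator {0..1} t *\<^sub>R (cmod (f t))\<^sup>2) = (\<lambda>t. (cmod (f t))\<^sup>2)"
    using g unfolding good_def by (auto simp: fun_eq_iff indicator_def)
  ultimately show ?thesis by (simp add: l2norm_def)
qed

lemma amgm_real:
  fixes X A d :: real
  assumes "A \<ge> 0" "d \<ge> 0" "\<And>l. l > 0 \<Longrightarrow> X \<le> (l * A + d / l) / 2"
  shows "X \<le> sqrt d * sqrt A"
proof (rule ccontr)
  assume n: "\<not> ?thesis"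
  have s0: "sqrt d * sqrt A \<ge> 0" using assms(1,2) by simp
  hence X: "X > 0" using n by linarith
  show False
  proof (cases "A > 0 \<and> d > 0")
    case True
    define a where "a = sqrt A"
    define b where "b = sqrt d"
    have a: "a > 0" "A = a * a" using True by (auto simp: a_def)
    have b: "b > 0" "d = b * b" using True by (auto simp: b_def)
    define l where "l = b / a"
    have l: "l > 0" using a b by (simp add: l_def)
    have "l * A + d / l = 2 * (b * a)" using a b unfolding l_def by (simp add: field_simps)
    thus False using assms(3)[OF l] n by (simp add: a_def b_def)
  next
    case False
    hence "A = 0 \<or> d = 0" using assms by auto
    thus False
    proof
      assume A0: "A = 0"
      define l where "l = d / X + 1"
      have "d / X \<ge> 0" using X assms(2) by simp
      hence l: "l > 0" unfolding l_def by linarith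
      have "d < X * l" using X assms(2) unfolding l_def by (simp add: field_simps)
      hence "d / l < X" using l by (simp add: divide_less_eq)
      thus False using assms(3)[OF l] A0 X by simp
    next
      assume d0: "d = 0"
      define l where "l = X / (A + 1)"
      have l: "l > 0" using X assms by (simp add: l_def)
      have "l * A < X" using X assms(1) unfolding l_def by (simp add: field_simps)
      thus False using assms(3)[OF l] d0 X by simp
    qed
  qed
qed

lemma CS_ind:
  assumes g: "good f" and d: "d \<ge> 0"
  shows "(\<integral>t. indicator {c..c+d} t * norm (f t) \<partial>lborel) \<le> sqrt d * l2norm f"
proof -
  define A where "A = (\<integral>t. (cmod (f t))\<^sup>2 \<partial>lborel)"
  have A0: "A \<ge> 0" unfolding A_def by simp
  have l2: "l2norm f = sqrt A" using good_l2norm[OF g] by (simp add: A_def)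
  have intf: "integrable lborel (\<lambda>t. norm (f t))" using good_integrable[OF g] by simp
  have int1: "integrable lborel (\<lambda>t. indicator {c..c+d} t * norm (f t))"
    using integrable_mult_indicator[OF _ intf, of "{c..c+d}"] by simp
  have intI: "integrable lborel (indicator {c..c+d} :: real \<Rightarrow> real)"
    by (simp add: emeasure_lborel_Icc_eq)
  have II: "(\<integral>t. indicator {c..c+d} t \<partial>lborel) = d" using d
    by (simp add: integral_indicator emeasure_lborel_Icc_eq measure_lborel_Icc)
  have "(\<integral>t. indicator {c..c+d} t * norm (f t) \<partial>lborel) \<le> (l * A + d / l) / 2" if l: "l > 0" for l
  proof -
    have "(\<integral>t. indicator {c..c+d} t * norm (f t) \<partial>lborel) \<le>
          (\<integral>t. (l * (cmod (f t))\<^sup>2 + indicator {c..c+d} t / l) / 2 \<partial>lborel)"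
    proof (rule integral_mono[OF int1])
      show "integrable lborel (\<lambda>t. (l * (cmod (f t))\<^sup>2 + indicator {c..c+d} t / l) / 2)"
        using good_sq_int[OF g] intI by (intro integrable_divide integrable_add integrable_mult_right) auto
      fix t
      show "indicator {c..c+d} t * norm (f t) \<le> (l * (cmod (f t))\<^sup>2 + indicator {c..c+d} t / l) / 2"
      proof (cases "t \<in> {c..c+d}")
        case True
        have "0 \<le> (l * norm (f t) - 1)\<^sup>2" by simp
        hence "2 * l * norm (f t) \<le> l * (l * (norm (f t))\<^sup>2) + 1" by (simp add: power2_eq_square algebra_simps)
        hence "l * (2 * norm (f t)) \<le> l * (l * (norm (f t))\<^sup>2 + 1 / l)" using l by (simp add: algebra_simps)
        hence "2 * norm (f t) \<le> l * (norm (f t))\<^sup>2 + 1 / l" using l by (meson mult_le_cancel_left_pos)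
        thus ?thesis using True by simp
      next
        case False thus ?thesis using l by simp
      qed
    qed
    also have "\<dots> = (l * A + d / l) / 2"
      using good_sq_int[OF g] intI II by (simp add: A_def)
    finally show ?thesis .
  qed
  hence "(\<integral>t. indicator {c..c+d} t * norm (f t) \<partial>lborel) \<le> sqrt d * sqrt A"
    by (intro amgm_real A0 d) auto
  thus ?thesis using l2 by simp
qed

lemma CS_ind':
  assumes g: "good f" and d: "d \<ge> 0"
  shows "(\<integral>t. indicator {x-d..x} t * norm (f t) \<partial>lborel) \<le> sqrt d * l2norm f"
  using CS_ind[OF g d, of "x - d"] by simp

lemma K_bound_pt:
  assumes g: "good f" and hc: "continuous_on UNIV h" and B: "\<And>u. u \<in> {0..1} \<Longrightarrow> norm (h u) \<le> B"
    and hz: "\<And>u. u \<in> {0..1} \<Longrightarrow> u > d \<Longrightarrow> h u = 0" and d: "d \<ge> 0" and x: "x \<le> 1"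
  shows "norm (K h f x) \<le> B * sqrt d * l2norm f"
proof -
  have B0: "B \<ge> 0" using B[of 0] by (meson atLeastAtMost_iff norm_ge_zero order_trans zero_le_one order_refl)
  have intf: "integrable lborel (\<lambda>t. norm (f t))" using good_integrable[OF g] by simp
  have int1: "integrable lborel (\<lambda>t. B * (indicator {x-d..x} t * norm (f t)))"
    using integrable_mult_indicator[OF _ intf, of "{x-d..x}"] by simp
  have "norm (K h f x) \<le> (\<integral>t. B * (indicator {x-d..x} t * norm (f t)) \<partial>lborel)"
    unfolding K_def set_lebesgue_integral_def
  proof (rule Bochner_Integration.integral_norm_bound_integral[OF K_int[OF g hc x] int1])
    fix t
    show "norm (indicator {0..x} t *\<^sub>R (h (x - t) * f t)) \<le> B * (indicator {x-d..x} t * norm (f t))"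
    proof (cases "t \<in> {0..x}")
      case True
      hence u: "x - t \<in> {0..1}" using x by auto
      show ?thesis
      proof (cases "x - t > d")
        case True thus ?thesis using hz[OF u] B0 by simp
      next
        case False
        hence "t \<in> {x-d..x}" using \<open>t \<in> {0..x}\<close> by auto
        thus ?thesis using True B[OF u] by (simp add: norm_mult mult_right_mono)
      qed
    qed (use B0 in simp)
  qed
  also have "\<dots> = B * (\<integral>t. indicator {x-d..x} t * norm (f t) \<partial>lborel)" by simp
  also have "\<dots> \<le> B * (sqrt d * l2norm f)" using CS_ind'[OF g d] B0 by (rule mult_left_mono) 
  finally show ?thesis by (simp add: mult.assoc)
qed

lemma measure_M01: "measure M01 {0..1} = 1"
  using emeasure_M01 by (simp add: measure_def)

lemma l2norm_le:
  assumes m: "g \<in> borel_measurable M01" and b: "\<And>x. x \<in> {0..1} \<Longrightarrow> norm (g x) \<le> C"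
  shows "l2norm g \<le> C"
proof -
  have C0: "C \<ge> 0" using b[of 0] by (meson atLeastAtMost_iff norm_ge_zero order_trans zero_le_one order_refl)
  have mi: "integrable M01 (\<lambda>x. (cmod (g x))\<^sup>2)"
    by (rule M01.integrable_const_bound[where B="C\<^sup>2"]) (use m b C0 in \<open>auto intro!: power_mono\<close>)
  have "integral\<^sup>L M01 (\<lambda>x. (cmod (g x))\<^sup>2) \<le> integral\<^sup>L M01 (\<lambda>x. C\<^sup>2)"
    by (rule integral_mono[OF mi]) (use b C0 in \<open>auto intro!: power_mono\<close>)
  also have "\<dots> = C\<^sup>2" using measure_M01 by simp
  finally have "sqrt (integral\<^sup>L M01 (\<lambda>x. (cmod (g x))\<^sup>2)) \<le> sqrt (C\<^sup>2)" by (rule real_sqrt_le_mono)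
  thus ?thesis unfolding l2norm_def using C0 by simp
qed

lemma l2norm_nonneg: "l2norm g \<ge> 0" by (simp add: l2norm_def)

lemma l2norm_cong:
  assumes "\<And>x. x \<in> {0..1} \<Longrightarrow> g x = g' x" shows "l2norm g = l2norm g'"
proof -
  have "integral\<^sup>L M01 (\<lambda>x. (cmod (g x))\<^sup>2) = integral\<^sup>L M01 (\<lambda>x. (cmod (g' x))\<^sup>2)"
    by (rule Bochner_Integration.integral_cong[OF refl]) (use assms in auto)
  thus ?thesis unfolding l2norm_def by simp
qed

lemma L2_cong:
  assumes "g \<in> L2" "\<And>x. x \<in> {0..1} \<Longrightarrow> g x = g' x" shows "g' \<in> L2"
proof -
  have "\<And>w. w \<in> space M01 \<Longrightarrow> g w = g' w" using assms(2) by simp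
  hence "g \<in> borel_measurable M01 \<longleftrightarrow> g' \<in> borel_measurable M01"
    by (rule measurable_cong)
  moreover have "integrable M01 (\<lambda>x. (cmod (g x))\<^sup>2) \<longleftrightarrow> integrable M01 (\<lambda>x. (cmod (g' x))\<^sup>2)"
    by (rule Bochner_Integration.integrable_cong[OF refl]) (use assms(2) in auto)
  ultimately show ?thesis using assms(1) unfolding L2_def mem_Collect_eq by argo
qed

lemma K_L2:
  assumes g: "good f" and hc: "continuous_on UNIV h"
  shows "K h f \<in> L2"
proof -
  obtain B where B: "B \<ge> 0" "\<And>u. u \<in> {0..1} \<Longrightarrow> norm (h u) \<le> B" using cont_bound[OF hc] by blast
  have m: "K h f \<in> borel_measurable M01" unfolding M01_def by (rule measurable_restrict_space1[OF K_meas[OF g hc]])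
  have b: "norm (K h f x) \<le> B * sqrt 1 * l2norm f" if "x \<in> {0..1}" for x
    by (rule K_bound_pt[OF g hc B(2)]) (use that in auto)
  have "integrable M01 (\<lambda>x. (cmod (K h f x))\<^sup>2)"
    by (rule M01.integrable_const_bound[where B="(B * l2norm f)\<^sup>2"]) (use m b B l2norm_nonneg in \<open>auto intro!: power_mono\<close>)
  thus ?thesis using m unfolding L2_def by blast
qed

lemma K_l2norm:
  assumes g: "good f" and hc: "continuous_on UNIV h" and B: "\<And>u. u \<in> {0..1} \<Longrightarrow> norm (h u) \<le> B"
    and hz: "\<And>u. u \<in> {0..1} \<Longrightarrow> u > d \<Longrightarrow> h u = 0" and d: "d \<ge> 0"
  shows "l2norm (K h f) \<le> B * sqrt d * l2norm f"
proof -
  have m: "K h f \<in> borel_measurable M01" unfolding M01_def by (rule measurable_restrict_space1[OF K_meas[OF g hc]])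
  show ?thesis by (rule l2norm_le[OF m]) (rule K_bound_pt[OF g hc B hz d], auto)
qed

definition mk :: "nat \<Rightarrow> real \<Rightarrow> complex" where
  "mk j u = complex_of_real (u ^ j / fact j)"

lemma mk_cont: "continuous_on UNIV (mk j)"
  unfolding mk_def by (intro continuous_intros) auto

lemma ftc_mono:
  fixes t x :: real
  assumes "t \<le> x"
  shows "(\<integral>s. indicator {t..x} s * ((s - t) ^ j / fact j) \<partial>lborel) = (x - t) ^ Suc j / fact (Suc j)"
proof -
  have "(\<integral>s. indicator {t..x} s *\<^sub>R ((s - t) ^ j / fact j) \<partial>lborel) =
        (x - t) ^ Suc j / fact (Suc j) - (t - t) ^ Suc j / fact (Suc j)"
  proof (rule integral_FTC_atLeastAtMost[OF assms])
    fix s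
    have d1: "((\<lambda>s. s - t) has_real_derivative 1) (at s within {t..x})"
      by (auto intro!: derivative_eq_intros)
    have "((\<lambda>s. (s - t) ^ Suc j) has_real_derivative (real (Suc j) * (s - t) ^ j)) (at s within {t..x})"
      using DERIV_power_Suc[OF d1, of j] by simp
    hence "((\<lambda>s. (s - t) ^ Suc j / fact (Suc j)) has_real_derivative (real (Suc j) * (s - t) ^ j / fact (Suc j))) (at s within {t..x})"
      by (rule DERIV_cdivide)
    moreover have "real (Suc j) * (s - t) ^ j / fact (Suc j) = (s - t) ^ j / fact j"
      by (simp add: fact_Suc del: of_nat_Suc)
    ultimately have "((\<lambda>s. (s - t) ^ Suc j / fact (Suc j)) has_real_derivative ((s - t) ^ j / fact j)) (at s within {t..x})"
      by simp
    thus "((\<lambda>s. (s - t) ^ Suc j / fact (Suc j)) has_vector_derivative ((s - t) ^ j / fact j)) (at s within {t..x})"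
      by (simp add: has_real_derivative_iff_has_vector_derivative)
  next
    show "continuous_on {t..x} (\<lambda>s. (s - t) ^ j / fact j)" by (intro continuous_intros) auto
  qed
  thus ?thesis by simp
qed

lemma fubini_step:
  assumes g: "good f" and x: "0 \<le> x" "x \<le> 1"
  shows "(LINT s:{0..x}|lborel. K (mk j) f s) = K (mk (Suc j)) f x"
proof -
  define G where "G s t = indicator {0..x} (s::real) *\<^sub>R (indicator {0..s} t *\<^sub>R (mk j (s - t) * f t))" for s t
  define H where "H s t = indicator {0..1::real} (s::real) * (indicator {0..1} t * norm (f t))" for s t
  note [measurable] = good_meas_borel[OF g] cont_meas[OF mk_cont[of j]]
  have intf: "integrable lborel (\<lambda>t. norm (f t))" using good_integrable[OF g] by simp
  have intf1: "integrable lborel (\<lambda>t. indicator {0..1} t * norm (f t))"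
    using integrable_mult_indicator[OF _ intf, of "{0..1}"] by simp
  have intI: "integrable lborel (indicator {0..1} :: real \<Rightarrow> real)"
    by (simp add: emeasure_lborel_Icc_eq)
  have Hm: "(\<lambda>(s,t). H s t) \<in> borel_measurable (lborel \<Otimes>\<^sub>M lborel)"
    unfolding H_def by measurable
  have Hint: "integrable (lborel \<Otimes>\<^sub>M lborel) (\<lambda>(s,t). H s t)"
  proof (rule lborel_pair.Fubini_integrable[OF Hm])
    have "(\<lambda>s. \<integral>t. norm (case (s, t) of (s, t) \<Rightarrow> H s t) \<partial>lborel) =
          (\<lambda>s. indicator {0..1} s * (\<integral>t. indicator {0..1} t * norm (f t) \<partial>lborel))"
      by (simp add: H_def abs_mult)
    thus "integrable lborel (\<lambda>s. \<integral>t. norm (case (s, t) of (s, t) \<Rightarrow> H s t) \<partial>lborel)"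
      using intI by simp
    show "AE s in lborel. integrable lborel (\<lambda>t. case (s, t) of (s, t) \<Rightarrow> H s t)"
      using intf1 by (simp add: H_def)
  qed
  have Gm: "(\<lambda>(s,t). G s t) \<in> borel_measurable (lborel \<Otimes>\<^sub>M lborel)"
  proof -
    have e: "(\<lambda>(s,t). G s t) = (\<lambda>z. (if 0 \<le> fst z \<and> fst z \<le> x then 1 else 0) *\<^sub>R
               ((if 0 \<le> snd z \<and> snd z \<le> fst z then 1 else 0) *\<^sub>R (mk j (fst z - snd z) * f (snd z))))"
      by (auto simp: fun_eq_iff indicator_def G_def)
    show ?thesis unfolding e by measurable
  qed
  have Gint: "integrable (lborel \<Otimes>\<^sub>M lborel) (\<lambda>(s,t). G s t)"
  proof (rule Bochner_Integration.integrable_bound[OF Hint Gm], rule AE_I2)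
    fix z :: "real \<times> real"
    obtain s t where z: "z = (s, t)" by (cases z)
    have "norm (G s t) \<le> norm (H s t)"
    proof (cases "0 \<le> t \<and> t \<le> s \<and> s \<le> x")
      case True
      have "norm (mk j (s - t)) \<le> 1"
      proof -
        have "(s - t) ^ j \<le> 1" using True x by (intro power_le_one) auto
        moreover have "(1::real) \<le> fact j" by simp
        ultimately have "(s - t) ^ j / fact j \<le> 1" using True
          by (metis divide_le_eq_1 fact_gt_zero less_le_trans not_le zero_less_one)
        moreover have "0 \<le> (s - t) ^ j / fact j" using True by simp
        moreover have "norm (mk j (s - t)) = \<bar>(s - t) ^ j / fact j\<bar>" by (simp only: mk_def norm_of_real)
        ultimately show ?thesis by linarith
      qed
      hence "norm (mk j (s - t) * f t) \<le> norm (f t)"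
        by (simp add: norm_mult mult_left_le_one_le)
      thus ?thesis using True x by (simp add: G_def H_def norm_mult)
    next
      case False thus ?thesis by (auto simp: G_def H_def indicator_def)
    qed
    thus "norm (case z of (s, t) \<Rightarrow> G s t) \<le> norm (case z of (s, t) \<Rightarrow> H s t)" by (simp add: z)
  qed
  have lhs: "(LINT s:{0..x}|lborel. K (mk j) f s) = (\<integral>s. \<integral>t. G s t \<partial>lborel \<partial>lborel)"
    unfolding set_lebesgue_integral_def K_def G_def by (simp only: integral_scaleR_right)
  have swap: "(\<integral>t. \<integral>s. G s t \<partial>lborel \<partial>lborel) = (\<integral>s. \<integral>t. G s t \<partial>lborel \<partial>lborel)"
    by (rule lborel_pair.Fubini_integral) (use Gint in simp)
  have inner: "(\<integral>s. G s t \<partial>lborel) = indicator {0..x} t *\<^sub>R (mk (Suc j) (x - t) * f t)" for t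
  proof (cases "0 \<le> t \<and> t \<le> x")
    case True
    have "(\<lambda>s. G s t) = (\<lambda>s. complex_of_real (indicator {t..x} s * ((s - t) ^ j / fact j)) * f t)"
      using True by (auto simp: fun_eq_iff G_def indicator_def mk_def)
    hence "(\<integral>s. G s t \<partial>lborel) = (\<integral>s. complex_of_real (indicator {t..x} s * ((s - t) ^ j / fact j)) * f t \<partial>lborel)"
      by (simp only:)
    also have "\<dots> = (\<integral>s. complex_of_real (indicator {t..x} s * ((s - t) ^ j / fact j)) \<partial>lborel) * f t"
      by (rule integral_mult_left_zero)
    also have "\<dots> = complex_of_real (\<integral>s. indicator {t..x} s * ((s - t) ^ j / fact j) \<partial>lborel) * f t"
      by (simp only: integral_complex_of_real)
    also have "\<dots> = mk (Suc j) (x - t) * f t" using ftc_mono[of t x j] True by (simp add: mk_def)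
    finally show ?thesis using True by simp
  next
    case False
    hence "(\<lambda>s. G s t) = (\<lambda>s. 0)" by (auto simp: fun_eq_iff G_def indicator_def)
    thus ?thesis using False by simp
  qed
  have k: "K (mk (Suc j)) f x = (\<integral>t. \<integral>s. G s t \<partial>lborel \<partial>lborel)"
    unfolding K_def set_lebesgue_integral_def inner by (rule refl)
  show ?thesis by (simp only: lhs swap k)
qed

lemma volterra_cong: "(\<And>t. t \<in> {0..x} \<Longrightarrow> g t = g' t) \<Longrightarrow> volterra g x = volterra g' x"
  unfolding volterra_def by (rule set_lebesgue_integral_cong) auto

lemma cauchy:
  assumes g: "good f"
  shows "x \<in> {0..1} \<Longrightarrow> (volterra ^^ Suc j) f x = K (mk j) f x"
proof (induction j arbitrary: x)
  case 0
  show ?case by (simp add: volterra_def K_def mk_def)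
next
  case (Suc j)
  have "(volterra ^^ Suc (Suc j)) f x = volterra ((volterra ^^ Suc j) f) x" by simp
  also have "\<dots> = volterra (K (mk j) f) x"
    by (rule volterra_cong) (use Suc in auto)
  also have "\<dots> = K (mk (Suc j)) f x"
    unfolding volterra_def by (rule fubini_step[OF g]) (use Suc in auto)
  finally show ?case .
qed

lemma K_sum:
  assumes g: "good f" and x: "x \<le> 1" and hc: "\<And>i. i \<in> I \<Longrightarrow> continuous_on UNIV (h i)"
  shows "(\<Sum>i\<in>I. c i * K (h i) f x) = K (\<lambda>u. \<Sum>i\<in>I. c i * h i u) f x"
proof -
  have "(\<Sum>i\<in>I. c i * K (h i) f x) = (\<Sum>i\<in>I. \<integral>t. c i * (indicator {0..x} t *\<^sub>R (h i (x - t) * f t)) \<partial>lborel)"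
    unfolding K_def set_lebesgue_integral_def by (simp only: integral_mult_right_zero)
  also have "\<dots> = (\<integral>t. (\<Sum>i\<in>I. c i * (indicator {0..x} t *\<^sub>R (h i (x - t) * f t))) \<partial>lborel)"
    by (rule Bochner_Integration.integral_sum[symmetric]) (intro integrable_mult_right K_int[OF g hc x])
  also have "\<dots> = K (\<lambda>u. \<Sum>i\<in>I. c i * h i u) f x"
    unfolding K_def set_lebesgue_integral_def
    by (rule Bochner_Integration.integral_cong[OF refl]) (auto simp: indicator_def sum_distrib_right mult.assoc)
  finally show ?thesis .
qed

definition good_of :: "(real \<Rightarrow> complex) \<Rightarrow> real \<Rightarrow> complex" where
  "good_of f = (\<lambda>t. indicator {0..1} t *\<^sub>R f t)"

lemma good_of_eq: "t \<in> {0..1} \<Longrightarrow> good_of f t = f t"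
  by (simp add: good_of_def)

lemma good_of_good: "f \<in> L2 \<Longrightarrow> good (good_of f)"
  unfolding good_def by (auto intro: L2_cong[where g=f] simp: good_of_def)

lemma good_of_l2norm: "l2norm (good_of f) = l2norm f"
  by (rule l2norm_cong) (simp add: good_of_def)

lemma volterra_pow_cong:
  "(\<And>t. t \<in> {0..1} \<Longrightarrow> g t = g' t) \<Longrightarrow> x \<in> {0..1} \<Longrightarrow> (volterra ^^ k) g x = (volterra ^^ k) g' x"
proof (induction k arbitrary: x)
  case 0 thus ?case by simp
next
  case (Suc k)
  show ?case by simp (rule volterra_cong, use Suc in auto)
qed

lemma polyV_cong:
  "(\<And>t. t \<in> {0..1} \<Longrightarrow> g t = g' t) \<Longrightarrow> x \<in> {0..1} \<Longrightarrow> polyV p g x = polyV p g' x"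
  unfolding polyV_def using volterra_pow_cong by (metis (no_types, lifting) sum.cong)

lemma K_cong:
  "(\<And>t. t \<in> {0..1} \<Longrightarrow> g t = g' t) \<Longrightarrow> x \<in> {0..1} \<Longrightarrow> K h g x = K h g' x"
  unfolding K_def by (rule set_lebesgue_integral_cong) auto

lemma polyV_ext:
  assumes "degree p \<le> n"
  shows "polyV p f x = (\<Sum>k\<le>n. coeff p k * (volterra ^^ k) f x)"
  unfolding polyV_def
  by (rule sum.mono_neutral_left) (use assms in \<open>auto intro: coeff_eq_0 simp: not_le\<close>)

definition kp :: "complex poly \<Rightarrow> real \<Rightarrow> complex" where
  "kp p u = (\<Sum>i\<le>degree p. coeff p (Suc i) * mk i u)"

lemma kp_cont: "continuous_on UNIV (kp p)"
  unfolding kp_def by (intro continuous_intros continuous_on_mult_left mk_cont)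

lemma polyV_K_good:
  assumes g: "good f" and x: "x \<in> {0..1}"
  shows "polyV p f x = coeff p 0 * f x + K (kp p) f x"
proof -
  have "polyV p f x = (\<Sum>k\<le>Suc (degree p). coeff p k * (volterra ^^ k) f x)"
    by (rule polyV_ext) simp
  also have "\<dots> = coeff p 0 * f x + (\<Sum>i\<le>degree p. coeff p (Suc i) * (volterra ^^ Suc i) f x)"
    by (simp only: sum.atMost_Suc_shift) simp
  also have "(\<Sum>i\<le>degree p. coeff p (Suc i) * (volterra ^^ Suc i) f x) = (\<Sum>i\<le>degree p. coeff p (Suc i) * K (mk i) f x)"
    using cauchy[OF g x] by simp
  also have "\<dots> = K (kp p) f x"
    unfolding kp_def by (rule K_sum[OF g]) (use x mk_cont in auto)
  finally show ?thesis .
qed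

lemma polyV_K:
  assumes f: "f \<in> L2" and x: "x \<in> {0..1}" and p0: "poly p 0 = 0"
  shows "polyV p f x = K (kp p) (good_of f) x"
proof -
  have "polyV p f x = polyV p (good_of f) x"
    using x by (intro polyV_cong) (auto simp: good_of_def)
  also have "\<dots> = K (kp p) (good_of f) x"
    using polyV_K_good[OF good_of_good[OF f] x] p0 by (simp add: poly_0_coeff_0)
  finally show ?thesis .
qed

definition pk :: "complex poly \<Rightarrow> complex poly" where
  "pk Q = (\<Sum>i\<le>degree Q. monom (coeff Q i * fact i) (Suc i))"

lemma coeff_pk: "coeff (pk Q) k = (if k = 0 then 0 else coeff Q (k - 1) * fact (k - 1))"
proof -
  have "coeff (pk Q) k = (\<Sum>i\<le>degree Q. if Suc i = k then coeff Q i * fact i else 0)"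
    unfolding pk_def coeff_sum by (simp add: coeff_monom)
  also have "\<dots> = (if k = 0 then 0 else coeff Q (k - 1) * fact (k - 1))"
  proof (cases k)
    case 0 thus ?thesis by simp
  next
    case (Suc m)
    have "(\<Sum>i\<le>degree Q. if Suc i = k then coeff Q i * fact i else 0) = (\<Sum>i\<le>degree Q. if i = m then coeff Q i * fact i else 0)"
      using Suc by simp
    also have "\<dots> = (if m \<le> degree Q then coeff Q m * fact m else 0)"
      by (simp add: sum.delta)
    also have "\<dots> = coeff Q m * fact m" using coeff_eq_0[of Q m] by auto
    finally show ?thesis using Suc by simp
  qed
  finally show ?thesis .
qed

lemma pk_0: "poly (pk Q) 0 = 0"
  by (simp add: poly_0_coeff_0 coeff_pk)

lemma degree_pk: "degree (pk Q) \<le> Suc (degree Q)"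
  by (rule degree_le) (auto simp: coeff_pk coeff_eq_0)

lemma polyV_pk_good:
  assumes g: "good f" and x: "x \<in> {0..1}"
  shows "polyV (pk Q) f x = K (poly Q) f x"
proof -
  have "polyV (pk Q) f x = (\<Sum>k\<le>Suc (degree Q). coeff (pk Q) k * (volterra ^^ k) f x)"
    by (rule polyV_ext[OF degree_pk])
  also have "\<dots> = (\<Sum>i\<le>degree Q. (coeff Q i * fact i) * (volterra ^^ Suc i) f x)"
    by (simp only: sum.atMost_Suc_shift) (simp add: coeff_pk)
  also have "\<dots> = (\<Sum>i\<le>degree Q. (coeff Q i * fact i) * K (mk i) f x)"
    using cauchy[OF g x] by simp
  also have "\<dots> = K (\<lambda>u. \<Sum>i\<le>degree Q. (coeff Q i * fact i) * mk i u) f x"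
    by (rule K_sum[OF g]) (use x mk_cont in auto)
  also have "(\<lambda>u. \<Sum>i\<le>degree Q. (coeff Q i * fact i) * mk i u) = poly Q"
    by (auto simp: fun_eq_iff poly_altdef mk_def intro!: sum.cong)
  finally show ?thesis .
qed

lemma polyV_pk:
  assumes f: "f \<in> L2" and x: "x \<in> {0..1}"
  shows "polyV (pk Q) f x = K (poly Q) (good_of f) x"
proof -
  have "polyV (pk Q) f x = polyV (pk Q) (good_of f) x"
    using x by (intro polyV_cong) (auto simp: good_of_def)
  thus ?thesis using polyV_pk_good[OF good_of_good[OF f] x] by simp
qed

lemma zero_L2: "(\<lambda>x. 0) \<in> L2"
  unfolding L2_def by simp

lemma l2norm_zero: "l2norm (\<lambda>x. 0) = 0"
  by (simp add: l2norm_def)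

lemma L2_meas: "f \<in> L2 \<Longrightarrow> f \<in> borel_measurable M01" unfolding L2_def by blast
lemma L2_sqint: "f \<in> L2 \<Longrightarrow> integrable M01 (\<lambda>x. (cmod (f x))\<^sup>2)" unfolding L2_def by blast

lemma sq_sum_le: "((x::real) + y)\<^sup>2 \<le> 2 * x\<^sup>2 + 2 * y\<^sup>2"
proof -
  have "0 \<le> (x - y)\<^sup>2" by simp
  thus ?thesis by (simp add: power2_eq_square algebra_simps)
qed

lemma L2_lin:
  assumes f: "f \<in> L2" and g: "g \<in> L2"
  shows "(\<lambda>x. a * f x + b * g x) \<in> L2"
proof -
  note [measurable] = L2_meas[OF f] L2_meas[OF g]
  have m: "(\<lambda>x. a * f x + b * g x) \<in> borel_measurable M01" by measurable
  have m2: "(\<lambda>x. (cmod (a * f x + b * g x))\<^sup>2) \<in> borel_measurable M01" by measurable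
  have i: "integrable M01 (\<lambda>x. 2 * (cmod a)\<^sup>2 * (cmod (f x))\<^sup>2 + 2 * (cmod b)\<^sup>2 * (cmod (g x))\<^sup>2)"
    using L2_sqint[OF f] L2_sqint[OF g] by (intro Bochner_Integration.integrable_add integrable_mult_right)
  have "integrable M01 (\<lambda>x. (cmod (a * f x + b * g x))\<^sup>2)"
  proof (rule Bochner_Integration.integrable_bound[OF i m2], rule AE_I2)
    fix x
    have "cmod (a * f x + b * g x) \<le> cmod a * cmod (f x) + cmod b * cmod (g x)"
      by (metis norm_mult norm_triangle_ineq)
    hence "(cmod (a * f x + b * g x))\<^sup>2 \<le> (cmod a * cmod (f x) + cmod b * cmod (g x))\<^sup>2"
      by (intro power_mono) auto
    also have "\<dots> \<le> 2 * (cmod a * cmod (f x))\<^sup>2 + 2 * (cmod b * cmod (g x))\<^sup>2" by (rule sq_sum_le)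
    finally show "norm ((cmod (a * f x + b * g x))\<^sup>2) \<le> norm (2 * (cmod a)\<^sup>2 * (cmod (f x))\<^sup>2 + 2 * (cmod b)\<^sup>2 * (cmod (g x))\<^sup>2)"
      by (simp add: power_mult_distrib)
  qed
  thus ?thesis using m unfolding L2_def by blast
qed

lemma L2_diff: "f \<in> L2 \<Longrightarrow> g \<in> L2 \<Longrightarrow> (\<lambda>x. f x - g x) \<in> L2"
  using L2_lin[of f g 1 "-1"] by simp

lemma L2_add: "f \<in> L2 \<Longrightarrow> g \<in> L2 \<Longrightarrow> (\<lambda>x. f x + g x) \<in> L2"
  using L2_lin[of f g 1 1] by simp

lemma minkowski:
  assumes f: "f \<in> L2" and g: "g \<in> L2"
  shows "l2norm (\<lambda>x. f x + g x) \<le> l2norm f + l2norm g"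
proof -
  note [measurable] = L2_meas[OF f] L2_meas[OF g]
  define A where "A = integral\<^sup>L M01 (\<lambda>x. (cmod (f x))\<^sup>2)"
  define B where "B = integral\<^sup>L M01 (\<lambda>x. (cmod (g x))\<^sup>2)"
  have A0: "A \<ge> 0" unfolding A_def by simp
  have B0: "B \<ge> 0" unfolding B_def by simp
  have iA: "integrable M01 (\<lambda>x. (cmod (f x))\<^sup>2)" by (rule L2_sqint[OF f])
  have iB: "integrable M01 (\<lambda>x. (cmod (g x))\<^sup>2)" by (rule L2_sqint[OF g])
  have mp: "(\<lambda>x. cmod (f x) * cmod (g x)) \<in> borel_measurable M01" by measurable
  have ip: "integrable M01 (\<lambda>x. cmod (f x) * cmod (g x))"
  proof (rule Bochner_Integration.integrable_bound[OF Bochner_Integration.integrable_add[OF iA iB] mp], rule AE_I2)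
    fix x
    have "0 \<le> (cmod (f x) - cmod (g x))\<^sup>2" by simp
    hence "cmod (f x) * cmod (g x) \<le> (cmod (f x))\<^sup>2 + (cmod (g x))\<^sup>2"
      by (simp add: power2_eq_square algebra_simps) (smt (verit) mult_nonneg_nonneg norm_ge_zero)
    thus "norm (cmod (f x) * cmod (g x)) \<le> norm ((cmod (f x))\<^sup>2 + (cmod (g x))\<^sup>2)" by simp
  qed
  define P where "P = integral\<^sup>L M01 (\<lambda>x. cmod (f x) * cmod (g x))"
  have CS: "P \<le> sqrt B * sqrt A"
  proof (rule amgm_real[OF A0 B0])
    fix l :: real assume l: "l > 0"
    have "P \<le> integral\<^sup>L M01 (\<lambda>x. (l * (cmod (f x))\<^sup>2 + (cmod (g x))\<^sup>2 / l) / 2)"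
      unfolding P_def
    proof (rule integral_mono[OF ip])
      show "integrable M01 (\<lambda>x. (l * (cmod (f x))\<^sup>2 + (cmod (g x))\<^sup>2 / l) / 2)"
        using iA iB by (intro integrable_divide Bochner_Integration.integrable_add integrable_mult_right) auto
      fix x
      let ?a = "cmod (f x)" and ?b = "cmod (g x)"
      have "0 \<le> (l * ?a - ?b)\<^sup>2" by simp
      hence "2 * l * (?a * ?b) \<le> l * (l * ?a\<^sup>2) + ?b\<^sup>2" by (simp add: power2_eq_square algebra_simps)
      hence "l * (2 * (?a * ?b)) \<le> l * (l * ?a\<^sup>2 + ?b\<^sup>2 / l)" using l by (simp add: algebra_simps)
      hence "2 * (?a * ?b) \<le> l * ?a\<^sup>2 + ?b\<^sup>2 / l" using l by (meson mult_le_cancel_left_pos)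
      thus "?a * ?b \<le> (l * ?a\<^sup>2 + ?b\<^sup>2 / l) / 2" by simp
    qed
    also have "\<dots> = (l * A + B / l) / 2"
      using iA iB by (simp add: A_def B_def)
    finally show "P \<le> (l * A + B / l) / 2" .
  qed
  have "integral\<^sup>L M01 (\<lambda>x. (cmod (f x + g x))\<^sup>2) \<le> integral\<^sup>L M01 (\<lambda>x. (cmod (f x))\<^sup>2 + 2 * (cmod (f x) * cmod (g x)) + (cmod (g x))\<^sup>2)"
  proof (rule integral_mono)
    show "integrable M01 (\<lambda>x. (cmod (f x + g x))\<^sup>2)" using L2_sqint[OF L2_add[OF f g]] .
    show "integrable M01 (\<lambda>x. (cmod (f x))\<^sup>2 + 2 * (cmod (f x) * cmod (g x)) + (cmod (g x))\<^sup>2)"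
      using iA iB ip by (intro Bochner_Integration.integrable_add integrable_mult_right)
    fix x
    have "cmod (f x + g x) \<le> cmod (f x) + cmod (g x)" by (rule norm_triangle_ineq)
    hence "(cmod (f x + g x))\<^sup>2 \<le> (cmod (f x) + cmod (g x))\<^sup>2" by (intro power_mono) auto
    thus "(cmod (f x + g x))\<^sup>2 \<le> (cmod (f x))\<^sup>2 + 2 * (cmod (f x) * cmod (g x)) + (cmod (g x))\<^sup>2"
      by (simp add: power2_eq_square algebra_simps)
  qed
  also have "\<dots> = A + 2 * P + B"
    using iA iB ip by (simp add: A_def B_def P_def)
  also have "\<dots> \<le> (sqrt A + sqrt B)\<^sup>2"
    using CS A0 B0 by (simp add: power2_eq_square algebra_simps)
  finally have "sqrt (integral\<^sup>L M01 (\<lambda>x. (cmod (f x + g x))\<^sup>2)) \<le> sqrt ((sqrt A + sqrt B)\<^sup>2)"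
    by (rule real_sqrt_le_mono)
  thus ?thesis unfolding l2norm_def A_def B_def by simp
qed

lemma l2norm_uminus: "l2norm (\<lambda>x. - g x) = l2norm g"
  by (simp add: l2norm_def)

lemma minkowski_diff:
  assumes f: "f \<in> L2" and g: "g \<in> L2"
  shows "l2norm (\<lambda>x. f x - g x) \<le> l2norm f + l2norm g"
proof -
  have "(\<lambda>x. - g x) \<in> L2" using L2_lin[OF g g, of "-1" 0] by simp
  from minkowski[OF f this] show ?thesis by (simp add: l2norm_uminus)
qed

lemma opnorm_bound:
  assumes "\<And>f. f \<in> L2 \<Longrightarrow> l2norm f \<le> 1 \<Longrightarrow> l2norm (A f) \<le> M"
  shows "opnorm A \<le> M"
  unfolding opnorm_def
proof (rule cSup_least)
  show "{l2norm (A f) |f. f \<in> L2 \<and> l2norm f \<le> 1} \<noteq> {}"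
    using zero_L2 l2norm_zero by fastforce
  show "\<And>x. x \<in> {l2norm (A f) |f. f \<in> L2 \<and> l2norm f \<le> 1} \<Longrightarrow> x \<le> M"
    using assms by blast
qed

lemma opnorm_upper:
  assumes "\<And>f. f \<in> L2 \<Longrightarrow> l2norm f \<le> 1 \<Longrightarrow> l2norm (A f) \<le> M"
    and "f \<in> L2" "l2norm f \<le> 1"
  shows "l2norm (A f) \<le> opnorm A"
  unfolding opnorm_def
proof (rule cSup_upper)
  show "l2norm (A f) \<in> {l2norm (A f) |f. f \<in> L2 \<and> l2norm f \<le> 1}" using assms(2,3) by blast
  show "bdd_above {l2norm (A f) |f. f \<in> L2 \<and> l2norm f \<le> 1}"
    unfolding bdd_above_def using assms(1) by blast
qed

definition Kop :: "(real \<Rightarrow> complex) \<Rightarrow> (real \<Rightarrow> complex) \<Rightarrow> real \<Rightarrow> complex" where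
  "Kop h f x = K h (good_of f) x"

lemma kern_op:
  assumes hc: "continuous_on UNIV h" and B: "\<And>u. u \<in> {0..1} \<Longrightarrow> norm (h u) \<le> Bd"
    and hz: "\<And>u. u \<in> {0..1} \<Longrightarrow> u > d \<Longrightarrow> h u = 0" and d: "d \<ge> 0"
    and f: "f \<in> L2" and A: "\<And>x. x \<in> {0..1} \<Longrightarrow> A x = K h (good_of f) x"
  shows "A \<in> L2" "l2norm A \<le> Bd * sqrt d * l2norm f"
proof -
  have g: "good (good_of f)" by (rule good_of_good[OF f])
  show "A \<in> L2" by (rule L2_cong[OF K_L2[OF g hc]]) (use A in auto)
  have "l2norm A = l2norm (K h (good_of f))" by (rule l2norm_cong) (use A in auto)
  also have "\<dots> \<le> Bd * sqrt d * l2norm (good_of f)" by (rule K_l2norm[OF g hc B hz d])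
  finally show "l2norm A \<le> Bd * sqrt d * l2norm f" by (simp add: good_of_l2norm)
qed

lemma K_lin:
  assumes F: "good F" and G: "good G" and x: "x \<le> 1" and hc: "continuous_on UNIV h"
  shows "K h (\<lambda>t. a * F t + b * G t) x = a * K h F x + b * K h G x"
proof -
  have "K h (\<lambda>t. a * F t + b * G t) x =
    (\<integral>t. a * (indicator {0..x} t *\<^sub>R (h (x - t) * F t)) + b * (indicator {0..x} t *\<^sub>R (h (x - t) * G t)) \<partial>lborel)"
    unfolding K_def set_lebesgue_integral_def
    by (rule Bochner_Integration.integral_cong[OF refl]) (auto simp: indicator_def algebra_simps)
  also have "\<dots> = (\<integral>t. a * (indicator {0..x} t *\<^sub>R (h (x - t) * F t)) \<partial>lborel) + (\<integral>t. b * (indicator {0..x} t *\<^sub>R (h (x - t) * G t)) \<partial>lborel)"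
    by (rule Bochner_Integration.integral_add) (intro integrable_mult_right K_int[OF F hc x] K_int[OF G hc x])+
  also have "\<dots> = a * K h F x + b * K h G x"
    unfolding K_def set_lebesgue_integral_def by (simp only: integral_mult_right_zero)
  finally show ?thesis .
qed

lemma K_diff:
  assumes F: "good F" and x: "x \<le> 1" and h1: "continuous_on UNIV h1" and h2: "continuous_on UNIV h2"
  shows "K h1 F x - K h2 F x = K (\<lambda>u. h1 u - h2 u) F x"
proof -
  have "K h1 F x - K h2 F x = (\<integral>t. indicator {0..x} t *\<^sub>R (h1 (x - t) * F t) - indicator {0..x} t *\<^sub>R (h2 (x - t) * F t) \<partial>lborel)"
    unfolding K_def set_lebesgue_integral_def
    by (rule Bochner_Integration.integral_diff[symmetric]) (auto intro!: K_int[OF F h1 x] K_int[OF F h2 x])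
  also have "\<dots> = K (\<lambda>u. h1 u - h2 u) F x"
    unfolding K_def set_lebesgue_integral_def
    by (rule Bochner_Integration.integral_cong[OF refl]) (auto simp: indicator_def algebra_simps)
  finally show ?thesis .
qed

lemma good_of_lin: "good_of (\<lambda>y. a * f y + b * g y) = (\<lambda>t. a * good_of f t + b * good_of g t)"
  by (auto simp: fun_eq_iff good_of_def indicator_def)

lemma Kop_lin:
  assumes hc: "continuous_on UNIV h" and f: "f \<in> L2" and g: "g \<in> L2" and x: "x \<le> 1"
  shows "Kop h (\<lambda>y. a * f y + b * g y) x = a * Kop h f x + b * Kop h g x"
  unfolding Kop_def good_of_lin by (rule K_lin[OF good_of_good[OF f] good_of_good[OF g] x hc])

lemma Kop_bounded:
  assumes hc: "continuous_on UNIV h" and B: "\<And>u. u \<in> {0..1} \<Longrightarrow> norm (h u) \<le> Bd"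
  shows "bounded_op (Kop h)"
proof -
  have hz: "\<And>u. u \<in> {0..1} \<Longrightarrow> u > 1 \<Longrightarrow> h u = 0" by auto
  have L: "Kop h f \<in> L2" and N: "l2norm (Kop h f) \<le> Bd * l2norm f" if f: "f \<in> L2" for f
    using kern_op[where d=1 and A="Kop h f", OF hc B hz _ f] by (auto simp: Kop_def)
  show ?thesis unfolding bounded_op_def
  proof (intro conjI ballI allI impI)
    show "\<And>f. f \<in> L2 \<Longrightarrow> Kop h f \<in> L2" by (rule L)
    show "\<exists>C. \<forall>f\<in>L2. l2norm (Kop h f) \<le> C * l2norm f" using N by blast
  next
    fix f g assume f: "f \<in> L2" and g: "g \<in> L2" and z: "l2norm (\<lambda>x. f x - g x) = 0"
    have fg: "(\<lambda>x. f x - g x) \<in> L2" by (rule L2_diff[OF f g])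
    have "l2norm (\<lambda>x. Kop h f x - Kop h g x) = l2norm (Kop h (\<lambda>x. f x - g x))"
    proof (rule l2norm_cong)
      fix x :: real assume "x \<in> {0..1}"
      thus "Kop h f x - Kop h g x = Kop h (\<lambda>x. f x - g x) x"
        using Kop_lin[OF hc f g, of x 1 "-1"] by simp
    qed
    also have "\<dots> \<le> Bd * 0" using N[OF fg] z by simp
    finally show "l2norm (\<lambda>x. Kop h f x - Kop h g x) = 0" using l2norm_nonneg by (metis mult_zero_right order_antisym)
  next
    fix f g a b assume f: "f \<in> L2" and g: "g \<in> L2"
    have "l2norm (\<lambda>x. Kop h (\<lambda>y. a * f y + b * g y) x - (a * Kop h f x + b * Kop h g x)) = l2norm (\<lambda>x. 0)"
      by (rule l2norm_cong) (use Kop_lin[OF hc f g] in auto)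
    thus "l2norm (\<lambda>x. Kop h (\<lambda>y. a * f y + b * g y) x - (a * Kop h f x + b * Kop h g x)) = 0"
      by (simp add: l2norm_zero)
  qed
qed

lemma nil_step:
  assumes kz: "\<And>u. 0 \<le> u \<Longrightarrow> u \<le> \<delta> \<Longrightarrow> k u = 0" and gz: "\<And>y. 0 \<le> y \<Longrightarrow> y < c \<Longrightarrow> g y = 0"
    and x: "x \<le> c + \<delta>"
  shows "Kop k g x = 0"
proof -
  have "(\<lambda>t. indicator {0..x} t *\<^sub>R (k (x - t) * good_of g t)) = (\<lambda>t. 0)"
  proof
    fix t
    show "indicator {0..x} t *\<^sub>R (k (x - t) * good_of g t) = 0"
    proof (cases "t \<in> {0..x}")
      case True
      show ?thesis
      proof (cases "t < c")
        case True thus ?thesis using gz[of t] \<open>t \<in> {0..x}\<close> by (simp add: good_of_def)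
      next
        case False thus ?thesis using kz[of "x - t"] \<open>t \<in> {0..x}\<close> x by simp
      qed
    qed simp
  qed
  thus ?thesis unfolding Kop_def K_def set_lebesgue_integral_def by simp
qed

lemma nilpotent_Kop:
  assumes kz: "\<And>u. 0 \<le> u \<Longrightarrow> u \<le> \<delta> \<Longrightarrow> k u = 0" and d: "\<delta> > 0"
  shows "nilpotent_op (Kop k)"
proof -
  obtain n :: nat where n: "real n * \<delta> > 1" using reals_Archimedean3[OF d] by blast
  have P: "\<And>y. 0 \<le> y \<Longrightarrow> y < real m * \<delta> \<Longrightarrow> (Kop k ^^ m) f y = 0" for m f
  proof (induction m)
    case 0 thus ?case by simp
  next
    case (Suc m)
    have "(Kop k ^^ Suc m) f y = Kop k ((Kop k ^^ m) f) y" by simp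
    also have "\<dots> = 0"
      by (rule nil_step[where c="real m * \<delta>", OF kz Suc.IH]) (use Suc.prems in \<open>auto simp: algebra_simps\<close>)
    finally show ?case .
  qed
  have "\<forall>f\<in>L2. l2norm ((Kop k ^^ n) f) = 0"
  proof
    fix f :: "real \<Rightarrow> complex"
    have "l2norm ((Kop k ^^ n) f) = l2norm (\<lambda>x. 0)"
      by (rule l2norm_cong) (use P n in auto)
    thus "l2norm ((Kop k ^^ n) f) = 0" by (simp add: l2norm_zero)
  qed
  thus ?thesis unfolding nilpotent_op_def by blast
qed

lemma kp_poly: "\<exists>Qp. \<forall>u. kp p u = poly Qp (complex_of_real u)"
proof
  show "\<forall>u. kp p u = poly (\<Sum>i\<le>degree p. monom (coeff p (Suc i) / fact i) i) (complex_of_real u)"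
    by (auto simp: kp_def poly_sum poly_monom mk_def intro!: sum.cong)
qed

lemma phi_props:
  fixes \<delta> :: real assumes d: "\<delta> > 0"
  and phi_def: "phi = (\<lambda>u. min 1 (max 0 ((u - \<delta>) / \<delta>)))"
  shows "continuous_on UNIV phi" "\<And>u. 0 \<le> phi u" "\<And>u. phi u \<le> 1"
    "\<And>u. u \<le> \<delta> \<Longrightarrow> phi u = 0" "\<And>u. u \<ge> 2 * \<delta> \<Longrightarrow> phi u = 1"
proof -
  show "continuous_on UNIV phi" unfolding phi_def by (intro continuous_intros) (use d in auto)
  show "\<And>u. 0 \<le> phi u" "\<And>u. phi u \<le> 1" unfolding phi_def by auto
  show "\<And>u. u \<le> \<delta> \<Longrightarrow> phi u = 0"
  proof -
    fix u assume "u \<le> \<delta>"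
    hence "(u - \<delta>) / \<delta> \<le> 0" using d by (simp add: divide_nonpos_pos)
    thus "phi u = 0" unfolding phi_def by simp
  qed
  show "\<And>u. u \<ge> 2 * \<delta> \<Longrightarrow> phi u = 1"
  proof -
    fix u assume "u \<ge> 2 * \<delta>"
    hence "(u - \<delta>) / \<delta> \<ge> 1" using d by (simp add: le_divide_eq)
    thus "phi u = 1" unfolding phi_def by simp
  qed
qed

theorem mainTheorem19:
  shows "\<forall>T. in_AV T \<longrightarrow>
           (\<forall>e>0. \<exists>N. in_AV N \<and> nilpotent_op N \<and> opnorm (\<lambda>f x. T f x - N f x) < e)"
proof (intro allI impI)
  fix T :: "(real \<Rightarrow> complex) \<Rightarrow> real \<Rightarrow> complex" and e :: real
  assume TA: "in_AV T" and e: "e > 0"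
  have Tb: "bounded_op T" using TA unfolding in_AV_def by blast
  have TL2: "\<And>f. f \<in> L2 \<Longrightarrow> T f \<in> L2" using Tb unfolding bounded_op_def by blast
  obtain CT where CT: "\<And>f. f \<in> L2 \<Longrightarrow> l2norm (T f) \<le> CT * l2norm f" using Tb unfolding bounded_op_def by blast
  obtain p where p0: "poly p 0 = 0" and pT: "opnorm (\<lambda>f x. T f x - polyV p f x) < e / 2"
    using TA e unfolding in_AV_def by (meson half_gt_zero)
  define q where "q = kp p"
  have qc: "continuous_on UNIV q" unfolding q_def by (rule kp_cont)
  obtain Bq where Bq0: "Bq \<ge> 0" and Bq: "\<And>u. u \<in> {0..1} \<Longrightarrow> norm (q u) \<le> Bq" using cont_bound[OF qc] by blast
  define B1 where "B1 = Bq + 1"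
  have B1: "B1 > 0" "Bq \<le> B1" using Bq0 by (auto simp: B1_def)
  define s0 where "s0 = min 1 (e / (4 * B1))"
  have s0: "s0 > 0" "s0 \<le> 1" "s0 \<le> e / (4 * B1)" using e B1 by (auto simp: s0_def)
  define \<delta> where "\<delta> = s0\<^sup>2 / 2"
  have d0: "\<delta> > 0" using s0 by (simp add: \<delta>_def)
  have sq: "sqrt (2 * \<delta>) = s0" using s0 by (simp add: \<delta>_def)
  have s0le: "Bq * s0 \<le> e / 4"
  proof -
    have "Bq * s0 \<le> B1 * s0" using B1 s0 by (intro mult_right_mono) auto
    also have "\<dots> \<le> B1 * (e / (4 * B1))" using B1 s0 by (intro mult_left_mono) auto
    also have "\<dots> = e / 4" using B1 by simp
    finally show ?thesis .
  qed
  define phi where "phi = (\<lambda>u. min 1 (max 0 ((u - \<delta>) / \<delta>)))"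
  note ph = phi_props[OF d0 phi_def]
  define kN where "kN u = q u * complex_of_real (phi u)" for u
  have kNc: "continuous_on UNIV kN" unfolding kN_def by (intro continuous_intros qc ph(1)[THEN continuous_on_of_real])
  have kNb: "norm (kN u) \<le> Bq" if "u \<in> {0..1}" for u
  proof -
    have "norm (kN u) = norm (q u) * \<bar>phi u\<bar>" by (simp add: kN_def norm_mult)
    also have "\<dots> \<le> Bq * 1" using Bq[OF that] ph(2,3)[of u] Bq0 by (intro mult_mono) auto
    finally show ?thesis by simp
  qed
  have kNz: "\<And>u. 0 \<le> u \<Longrightarrow> u \<le> \<delta> \<Longrightarrow> kN u = 0" using ph(4) by (simp add: kN_def)
  define N where "N = Kop kN"
  have Nb: "bounded_op N" unfolding N_def by (rule Kop_bounded[OF kNc kNb])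
  have NL2: "\<And>f. f \<in> L2 \<Longrightarrow> N f \<in> L2" using Nb unfolding bounded_op_def by blast
  have Pq: "\<And>f x. f \<in> L2 \<Longrightarrow> x \<in> {0..1} \<Longrightarrow> polyV p f x = K q (good_of f) x"
    unfolding q_def using polyV_K p0 by blast
  have PL2: "polyV p f \<in> L2" and Pn: "l2norm (polyV p f) \<le> Bq * sqrt 1 * l2norm f" if f: "f \<in> L2" for f
    using kern_op[where d=1 and A="polyV p f", OF qc Bq _ _ f] Pq[OF f] by auto
  have PN: "l2norm (\<lambda>x. polyV p f x - N f x) \<le> Bq * s0 * l2norm f" "(\<lambda>x. polyV p f x - N f x) \<in> L2"
    if f: "f \<in> L2" for f
  proof -
    define h where "h = (\<lambda>u. q u - kN u)"
    have hc: "continuous_on UNIV h" unfolding h_def by (intro continuous_intros qc kNc)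
    have hb: "norm (h u) \<le> Bq" if "u \<in> {0..1}" for u
    proof -
      have "h u = q u * complex_of_real (1 - phi u)" by (simp add: h_def kN_def algebra_simps)
      hence "norm (h u) = norm (q u) * \<bar>1 - phi u\<bar>" by (simp only: norm_mult norm_of_real)
      also have "\<dots> \<le> Bq * 1" using Bq[OF that] ph(2,3)[of u] Bq0 by (intro mult_mono) auto
      finally show ?thesis by simp
    qed
    have hz: "h u = 0" if "u \<in> {0..1}" "u > 2 * \<delta>" for u
      using ph(5)[of u] that by (simp add: h_def kN_def)
    have eq: "polyV p f x - N f x = K h (good_of f) x" if "x \<in> {0..1}" for x
      using Pq[OF f that] K_diff[OF good_of_good[OF f] _ qc kNc, of x] that
      by (simp add: N_def Kop_def h_def)
    note ko = kern_op[where d="2 * \<delta>" and A="\<lambda>x. polyV p f x - N f x", OF hc hb hz _ f eq]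
    show "(\<lambda>x. polyV p f x - N f x) \<in> L2" using ko(1) d0 by simp
    show "l2norm (\<lambda>x. polyV p f x - N f x) \<le> Bq * s0 * l2norm f" using ko(2) d0 sq by simp
  qed
  have nil: "nilpotent_op N" unfolding N_def by (rule nilpotent_Kop[OF kNz d0])
  have inN: "in_AV N"
    unfolding in_AV_def
  proof (intro conjI allI impI)
    show "bounded_op N" by (rule Nb)
    fix e' :: real assume e': "e' > 0"
    define \<eta> where "\<eta> = e' / (2 * B1)"
    have \<eta>: "\<eta> > 0" using e' B1 by (simp add: \<eta>_def)
    obtain r where rp: "real_polynomial_function r" and rb: "\<And>u. u \<in> {0..1} \<Longrightarrow> \<bar>phi u - r u\<bar> < \<eta>"
      using Stone_Weierstrass_real_polynomial_function[of "{0..1::real}" phi \<eta>] ph(1) \<eta>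
      by (metis compact_Icc continuous_on_subset subset_UNIV)
    obtain a m where r: "r = (\<lambda>x. \<Sum>i\<le>m. a i * x ^ i)" using rp real_polynomial_function_iff_sum by blast
    define Qr where "Qr = (\<Sum>i\<le>m. monom (complex_of_real (a i)) i)"
    have Qr: "poly Qr (complex_of_real u) = complex_of_real (r u)" for u
      by (simp add: Qr_def r poly_sum poly_monom)
    obtain Qp where Qp: "\<And>u. q u = poly Qp (complex_of_real u)" using kp_poly[of p] unfolding q_def by blast
    define Q' where "Q' = Qp * Qr"
    have Q': "poly Q' (complex_of_real u) = q u * complex_of_real (r u)" for u
      by (simp add: Q'_def Qp Qr)
    have rc: "continuous_on UNIV r" unfolding r by (intro continuous_intros)
    have Q'c: "continuous_on UNIV (\<lambda>u. poly Q' (complex_of_real u))"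
      unfolding Q' by (intro continuous_intros qc rc)
    define h where "h = (\<lambda>u. kN u - poly Q' (complex_of_real u))"
    have hc: "continuous_on UNIV h" unfolding h_def by (intro continuous_intros kNc Q'c)
    have hb: "norm (h u) \<le> Bq * \<eta>" if "u \<in> {0..1}" for u
    proof -
      have "h u = q u * complex_of_real (phi u - r u)" by (simp add: h_def kN_def Q' algebra_simps)
      hence "norm (h u) = norm (q u) * \<bar>phi u - r u\<bar>" by (simp only: norm_mult norm_of_real)
      also have "\<dots> \<le> Bq * \<eta>" using Bq[OF that] rb[OF that] Bq0 by (intro mult_mono) auto
      finally show ?thesis .
    qed
    have hz: "\<And>u. u \<in> {0..1} \<Longrightarrow> u > 1 \<Longrightarrow> h u = 0" by auto
    have eq: "N f x - polyV (pk Q') f x = K h (good_of f) x" if f: "f \<in> L2" and x: "x \<in> {0..1}" for f x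
      using polyV_pk[OF f x, of Q'] K_diff[OF good_of_good[OF f] _ kNc Q'c, of x] x
      by (simp add: N_def Kop_def h_def)
    have "opnorm (\<lambda>f x. N f x - polyV (pk Q') f x) \<le> Bq * \<eta>"
    proof (rule opnorm_bound)
      fix f assume f: "f \<in> L2" and f1: "l2norm f \<le> 1"
      have "l2norm (\<lambda>x. N f x - polyV (pk Q') f x) \<le> Bq * \<eta> * sqrt 1 * l2norm f"
        by (rule kern_op(2)[OF hc hb hz _ f eq[OF f]]) auto
      also have "\<dots> \<le> Bq * \<eta> * 1" using f1 Bq0 \<eta> by (simp add: mult_left_le)
      finally show "l2norm (\<lambda>x. N f x - polyV (pk Q') f x) \<le> Bq * \<eta>" by simp
    qed
    also have "Bq * \<eta> < e'"
    proof -
      have "Bq * \<eta> \<le> B1 * \<eta>" using B1 \<eta> by (intro mult_right_mono) auto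
      also have "\<dots> = e' / 2" using B1 by (simp add: \<eta>_def)
      finally show ?thesis using e' by simp
    qed
    finally show "\<exists>p. poly p 0 = 0 \<and> opnorm (\<lambda>f x. N f x - polyV p f x) < e'"
      using pk_0 by blast
  qed
  have TPb: "\<And>f. f \<in> L2 \<Longrightarrow> l2norm f \<le> 1 \<Longrightarrow> l2norm (\<lambda>x. T f x - polyV p f x) \<le> max CT 0 + Bq"
  proof -
    fix f assume f: "f \<in> L2" and f1: "l2norm f \<le> 1"
    have "l2norm (T f) \<le> max CT 0"
    proof -
      have "l2norm (T f) \<le> CT * l2norm f" by (rule CT[OF f])
      also have "\<dots> \<le> max CT 0 * l2norm f" using l2norm_nonneg[of f] by (intro mult_right_mono) auto
      also have "\<dots> \<le> max CT 0 * 1" using f1 by (intro mult_left_mono) auto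
      finally show ?thesis by simp
    qed
    moreover have "l2norm (polyV p f) \<le> Bq" using Pn[OF f] mult_left_le[OF f1 Bq0] by simp
    ultimately show "l2norm (\<lambda>x. T f x - polyV p f x) \<le> max CT 0 + Bq"
      using minkowski_diff[OF TL2[OF f] PL2[OF f]] by linarith
  qed
  have "opnorm (\<lambda>f x. T f x - N f x) \<le> opnorm (\<lambda>f x. T f x - polyV p f x) + e / 4"
  proof (rule opnorm_bound)
    fix f assume f: "f \<in> L2" and f1: "l2norm f \<le> 1"
    have tp: "(\<lambda>x. T f x - polyV p f x) \<in> L2" by (rule L2_diff[OF TL2[OF f] PL2[OF f]])
    have a: "l2norm (\<lambda>x. T f x - N f x) = l2norm (\<lambda>x. (T f x - polyV p f x) + (polyV p f x - N f x))"
      by simp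
    have b: "l2norm (\<lambda>x. (T f x - polyV p f x) + (polyV p f x - N f x)) \<le> l2norm (\<lambda>x. T f x - polyV p f x) + l2norm (\<lambda>x. polyV p f x - N f x)"
      by (rule minkowski[OF tp PN(2)[OF f]])
    have c: "l2norm (\<lambda>x. T f x - polyV p f x) \<le> opnorm (\<lambda>f x. T f x - polyV p f x)"
      using opnorm_upper[where A="\<lambda>f x. T f x - polyV p f x", OF TPb f f1] by simp
    have d: "Bq * s0 * l2norm f \<le> Bq * s0"
      using mult_left_le[OF f1, of "Bq * s0"] Bq0 s0 by simp
    show "l2norm (\<lambda>x. T f x - N f x) \<le> opnorm (\<lambda>f x. T f x - polyV p f x) + e / 4"
      using a b c d PN(1)[OF f] s0le by linarith
  qed
  also have "\<dots> < e" using pT e by linarith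
  finally have "opnorm (\<lambda>f x. T f x - N f x) < e" .
  thus "\<exists>N. in_AV N \<and> nilpotent_op N \<and> opnorm (\<lambda>f x. T f x - N f x) < e"
    using inN nil by blast
qed

end
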